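(* Let $n\ge1$. The number of symmetric Brauer diagrams on $2n$ strands equals $a_{2n}$, where $a_0=a_1=1$ and $a_m=a_{m-1}+2(m-1)a_{m-2}$ for $m>1$. Consequently, $\mathrm{SBr}(\mathrm{A}_{2n-1})$ is a $\mathbb{Z}[\delta^{\pm1}]$-subalgebra of $\mathrm{Br}(\mathrm{A}_{2n-1})$, free over $\mathbb{Z}[\delta^{\pm1}]$ of rank $a_{2n}$.
   Context: $\mathrm{Br}(\mathrm{A}_{2n-1})$ denotes the classical Brauer algebra on $2n$ strands over $\mathbb{Z}[\delta^{\pm1}]$: it is free with basis the Brauer diagrams, i.e. perfect matchings of the $4n$ dots $(j,1),(j,0)$, $1\le j\le 2n$, with multiplication by concatenation where each closed loop formed is replaced by a factor $\delta$. A Brauer diagram is symmetric if it is invariant under the reflection $(j,\epsilon)\mapsto(2n+1-j,\epsilon)$ of the dots. $\mathrm{SBr}(\mathrm{A}_{2n-1})$ is the $\mathbb{Z}[\delta^{\pm1}]$-linear span of the symmetric Brauer diagrams. *)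

theory Defs
  imports Complex_Main "HOL-Library.Function_Algebras"
begin

text \<open>Dots of the Brauer diagrams on N strands: (j, True) is the top dot (j,1),
  (j, False) is the bottom dot (j,0), for 1 <= j <= N.\<close>
type_synonym dot = "nat \<times> bool"
type_synonym diagram = "dot set set"

definition dots :: "nat \<Rightarrow> dot set" where
  "dots N = {1..N} \<times> UNIV"

definition brauer_diagrams :: "nat \<Rightarrow> diagram set" where
  "brauer_diagrams N = {M. (\<forall>e\<in>M. card e = 2 \<and> e \<subseteq> dots N) \<and> (\<forall>x\<in>dots N. \<exists>!e\<in>M. x \<in> e)}"

definition reflect :: "nat \<Rightarrow> dot \<Rightarrow> dot" where
  "reflect N x = (N + 1 - fst x, snd x)"

definition symmetric_diagram :: "nat \<Rightarrow> diagram \<Rightarrow> bool" where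
  "symmetric_diagram N M \<longleftrightarrow> (\<lambda>e. reflect N ` e) ` M = M"

definition sym_diagrams :: "nat \<Rightarrow> diagram set" where
  "sym_diagrams N = {M \<in> brauer_diagrams N. symmetric_diagram N M}"

fun a_seq :: "nat \<Rightarrow> nat" where
  "a_seq 0 = 1"
| "a_seq (Suc 0) = 1"
| "a_seq (Suc (Suc m)) = a_seq (Suc m) + 2 * (Suc m) * a_seq m"

text \<open>Concatenation: d1 is stacked on top of d2. Vertices of the stacked picture
  are (j, level): level 2 = top row of d1, level 1 = identified middle row
  (bottom of d1 = top of d2), level 0 = bottom row of d2.\<close>
definition up1 :: "dot \<Rightarrow> nat \<times> nat" where
  "up1 x = (fst x, if snd x then 2 else 1)"

definition up2 :: "dot \<Rightarrow> nat \<times> nat" where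
  "up2 x = (fst x, if snd x then 1 else 0)"

definition outer :: "dot \<Rightarrow> nat \<times> nat" where
  "outer x = (fst x, if snd x then 2 else 0)"

definition stack_edges :: "diagram \<Rightarrow> diagram \<Rightarrow> ((nat \<times> nat) \<times> (nat \<times> nat)) set" where
  "stack_edges d1 d2 =
     {(up1 x, up1 y) | x y. {x, y} \<in> d1 \<and> x \<noteq> y} \<union>
     {(up2 x, up2 y) | x y. {x, y} \<in> d2 \<and> x \<noteq> y}"

definition stack_conn :: "diagram \<Rightarrow> diagram \<Rightarrow> ((nat \<times> nat) \<times> (nat \<times> nat)) set" where
  "stack_conn d1 d2 = (stack_edges d1 d2)\<^sup>*"

definition concat :: "nat \<Rightarrow> diagram \<Rightarrow> diagram \<Rightarrow> diagram" where
  "concat N d1 d2 = {{x, y} | x y. x \<in> dots N \<and> y \<in> dots N \<and> x \<noteq> y \<and>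
                        (outer x, outer y) \<in> stack_conn d1 d2}"

definition loops :: "nat \<Rightarrow> diagram \<Rightarrow> diagram \<Rightarrow> nat" where
  "loops N d1 d2 = card {C. \<exists>j\<in>{1..N}. C = stack_conn d1 d2 `` {(j, 1)} \<and>
                              (\<forall>x\<in>dots N. outer x \<notin> C)}"

text \<open>The Brauer algebra over a commutative ring R with parameter delta: elements are
  R-valued functions on diagrams vanishing outside the Brauer diagrams (free module
  with basis the diagrams); multiplication is the bilinear extension of concatenation,
  with each closed loop replaced by a factor delta.\<close>
definition Br :: "nat \<Rightarrow> (diagram \<Rightarrow> 'a::comm_ring_1) set" where
  "Br N = {x. \<forall>D. D \<notin> brauer_diagrams N \<longrightarrow> x D = 0}"

definition basis_elt :: "diagram \<Rightarrow> diagram \<Rightarrow> 'a::comm_ring_1" where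
  "basis_elt D = (\<lambda>E. if E = D then 1 else 0)"

definition br_scale :: "'a::comm_ring_1 \<Rightarrow> (diagram \<Rightarrow> 'a) \<Rightarrow> (diagram \<Rightarrow> 'a)" where
  "br_scale r x = (\<lambda>D. r * x D)"

definition br_mult :: "nat \<Rightarrow> 'a::comm_ring_1 \<Rightarrow> (diagram \<Rightarrow> 'a) \<Rightarrow> (diagram \<Rightarrow> 'a) \<Rightarrow> (diagram \<Rightarrow> 'a)" where
  "br_mult N \<delta> x y = (\<lambda>D. \<Sum>d1\<in>brauer_diagrams N. \<Sum>d2\<in>brauer_diagrams N.
      if concat N d1 d2 = D then x d1 * y d2 * \<delta> ^ loops N d1 d2 else 0)"

definition id_diagram :: "nat \<Rightarrow> diagram" where
  "id_diagram N = {{(j, True), (j, False)} | j. j \<in> {1..N}}"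

definition br_one :: "nat \<Rightarrow> diagram \<Rightarrow> 'a::comm_ring_1" where
  "br_one N = basis_elt (id_diagram N)"

definition SBr :: "nat \<Rightarrow> (diagram \<Rightarrow> 'a::comm_ring_1) set" where
  "SBr N = module.span br_scale (basis_elt ` sym_diagrams N)"

end

theory Submission
  imports Defs
begin


definition pm :: "('v \<times> 'v) set \<Rightarrow> bool" where
  "pm A \<longleftrightarrow> sym A \<and> (\<forall>x. (x, x) \<notin> A) \<and> (\<forall>x y z. (x, y) \<in> A \<longrightarrow> (x, z) \<in> A \<longrightarrow> y = z)"

locale walk =
  fixes A B :: "('v \<times> 'v) set" and u :: 'v
  assumes pmA: "pm A" and pmB: "pm B" and finA: "finite A" and finB: "finite B"
    and uA: "\<exists>y. (u, y) \<in> A" and uB: "\<not> (\<exists>y. (u, y) \<in> B)"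
begin

definition R :: "nat \<Rightarrow> ('v \<times> 'v) set" where "R i = (if even i then A else B)"

fun w :: "nat \<Rightarrow> 'v" where
  "w 0 = u"
| "w (Suc i) = (THE y. (w i, y) \<in> R i)"

definition ok :: "nat \<Rightarrow> bool" where "ok k \<longleftrightarrow> (\<forall>i<k. (w i, w (Suc i)) \<in> R i)"

lemma pmR: "pm (R i)" using pmA pmB by (simp add: R_def)

lemma R_sym: "(x, y) \<in> R i \<Longrightarrow> (y, x) \<in> R i"
  using pmR[of i] unfolding pm_def sym_def by blast

lemma R_irr: "(x, x) \<notin> R i"
  using pmR[of i] unfolding pm_def by blast

lemma R_fun: "(x, y) \<in> R i \<Longrightarrow> (x, z) \<in> R i \<Longrightarrow> y = z"
  using pmR[of i] unfolding pm_def by blast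

lemma w_step: "(w i, y) \<in> R i \<Longrightarrow> w (Suc i) = y"
  by (auto intro: the_equality R_fun)

lemma ok_Suc: "ok (Suc k) \<longleftrightarrow> ok k \<and> (\<exists>y. (w k, y) \<in> R k)"
proof
  assume "ok (Suc k)"
  then show "ok k \<and> (\<exists>y. (w k, y) \<in> R k)" unfolding ok_def by auto
next
  assume h: "ok k \<and> (\<exists>y. (w k, y) \<in> R k)"
  then obtain y where y: "(w k, y) \<in> R k" by blast
  then have "(w k, w (Suc k)) \<in> R k" using w_step[OF y] by simp
  then show "ok (Suc k)" using h unfolding ok_def by (auto simp: less_Suc_eq)
qed

lemma ok_edge: "ok k \<Longrightarrow> i < k \<Longrightarrow> (w i, w (Suc i)) \<in> R i"
  unfolding ok_def by blast

lemma R_SS: "R (Suc (Suc i)) = R i" by (simp add: R_def)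

lemma w_inj_aux:
  assumes ok: "ok k"
  shows "j \<le> k \<Longrightarrow> i < j \<Longrightarrow> w i \<noteq> w j"
proof (induction j arbitrary: i rule: less_induct)
  case (less j)
  show ?case
  proof
    assume eq: "w i = w j"
    from less.prems obtain j1 where j: "j = Suc j1" by (cases j) auto
    have e: "(w j1, w j) \<in> R j1" using ok_edge[OF ok, of j1] j less.prems by simp
    show False
    proof (cases i)
      case 0
      then have wj: "w j = u" using eq by simp
      show False
      proof (cases "even j1")
        case True
        then have "(u, w j1) \<in> A" using R_sym[OF e[unfolded wj]] by (simp add: R_def)
        moreover have "(u, w 1) \<in> A" using ok_edge[OF ok, of 0] less.prems by (simp add: R_def)
        ultimately have w1: "w j1 = w 1" using pmA unfolding pm_def by blast
        show False
        proof (cases "j1 = 0")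
          case True
          then show False using e wj R_irr by (simp add: j)
        next
          case False
          then have "1 < j1" using \<open>even j1\<close> by (metis One_nat_def dvd_refl even_Suc less_one linorder_neqE_nat not_less0 odd_one)
          then show False using less.IH[of j1 1] j less.prems w1 by auto
        qed
      next
        case False
        then have "(u, w j1) \<in> B" using R_sym[OF e[unfolded wj]] by (simp add: R_def)
        then show False using uB by blast
      qed
    next
      case (Suc i1)
      have e': "(w i1, w i) \<in> R i1" using ok_edge[OF ok, of i1] Suc less.prems by simp
      show False
      proof (cases "even i1 = even j1")
        case True
        then have "R i1 = R j1" by (simp add: R_def)
        then have "w i1 = w j1" using e e' eq R_sym R_fun by metis
        moreover have "i1 < j1" using Suc j less.prems by simp
        ultimately show False using less.IH[of j1 i1] j less.prems by auto
      next
        case False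
        then have Rs: "R i = R j1" using Suc by (simp add: R_def)
        have "(w i, w (Suc i)) \<in> R i" using ok_edge[OF ok, of i] less.prems by simp
        moreover have "(w i, w j1) \<in> R i" using e eq Rs R_sym by metis
        ultimately have ws: "w (Suc i) = w j1" using R_fun by blast
        have "i \<le> j1" using j less.prems by simp
        moreover have "i \<noteq> j1"
          using ws \<open>(w i, w (Suc i)) \<in> R i\<close> R_irr by auto
        moreover have "Suc i \<noteq> j1" using False Suc by auto
        ultimately have "Suc i < j1" by simp
        then show False using less.IH[of j1 "Suc i"] j less.prems ws by auto
      qed
    qed
  qed
qed

lemma ok_bound:
  assumes "ok k" shows "k \<le> card (Range A \<union> Range B)"
proof -
  have sub: "w ` {1..k} \<subseteq> Range A \<union> Range B"
  proof
    fix z assume "z \<in> w ` {1..k}"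
    then obtain i where i: "1 \<le> i" "i \<le> k" "z = w i" by auto
    then obtain i1 where "i = Suc i1" by (cases i) auto
    then have "(w i1, z) \<in> R i1" using ok_edge[OF assms, of i1] i by simp
    then show "z \<in> Range A \<union> Range B" by (auto simp: R_def split: if_splits)
  qed
  have inj: "inj_on w {1..k}"
  proof (rule inj_onI)
    fix i j assume ij: "i \<in> {1..k}" "j \<in> {1..k}" "w i = w j"
    show "i = j"
    proof (rule ccontr)
      assume "i \<noteq> j"
      then have "i < j \<or> j < i" by arith
      then show False using w_inj_aux[OF assms, of j i] w_inj_aux[OF assms, of i j] ij by auto
    qed
  qed
  have fin: "finite (Range A \<union> Range B)" using finA finB by (simp add: finite_Range)
  have "card (w ` {1..k}) \<le> card (Range A \<union> Range B)" using card_mono[OF fin sub] .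
  moreover have "card (w ` {1..k}) = card {1..k}" using card_image[OF inj] .
  ultimately have "card {1..k} \<le> card (Range A \<union> Range B)" by simp
  then show ?thesis by simp
qed

lemma exT: "\<exists>T. ok T \<and> \<not> ok (Suc T)"
proof (rule ccontr)
  assume "\<not> ?thesis"
  then have "ok n" for n
  proof (induction n)
    case 0 then show ?case by (simp add: ok_def)
  next
    case (Suc n) then show ?case by blast
  qed
  then show False using ok_bound[of "Suc (card (Range A \<union> Range B))"] by simp
qed

definition xo :: "'v \<Rightarrow> bool" where
  "xo z \<longleftrightarrow> (\<exists>y. (z, y) \<in> A) \<noteq> (\<exists>y. (z, y) \<in> B)"

lemma main:
  "\<exists>v. v \<noteq> u \<and> xo v \<and> (u, v) \<in> (A \<union> B)\<^sup>* \<and>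
     (\<forall>z. (u, z) \<in> (A \<union> B)\<^sup>* \<longrightarrow> xo z \<longrightarrow> z = u \<or> z = v)"
proof -
  obtain T where T: "ok T" "\<not> ok (Suc T)" using exT by blast
  have noR: "\<not> (\<exists>y. (w T, y) \<in> R T)" using T ok_Suc by blast
  have "ok 1" unfolding One_nat_def ok_Suc using uA by (simp add: R_def ok_def)
  then have T1: "T \<ge> 1" using T(2) by (cases T) auto
  then obtain T1 where T1d: "T = Suc T1" by (cases T) auto
  have conn: "k \<le> T \<Longrightarrow> (u, w k) \<in> (A \<union> B)\<^sup>*" for k
  proof (induction k)
    case 0 then show ?case by simp
  next
    case (Suc k)
    then have "(w k, w (Suc k)) \<in> R k" using ok_edge[OF T(1)] by simp
    then have "(w k, w (Suc k)) \<in> A \<union> B" by (auto simp: R_def split: if_splits)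
    with Suc show ?case by (meson Suc_leD rtrancl.rtrancl_into_rtrancl)
  qed
  have ne: "w T \<noteq> u" using w_inj_aux[OF T(1), of T 0] T1 by simp
  have "(w T, w T1) \<in> R T1" using ok_edge[OF T(1), of T1] T1d R_sym by simp
  then have xT: "xo (w T)" using noR T1d by (auto simp: xo_def R_def split: if_splits)
  have clo: "(u, z) \<in> (A \<union> B)\<^sup>* \<Longrightarrow> \<exists>k\<le>T. z = w k" for z
  proof (induction rule: rtrancl_induct)
    case base then show ?case by (intro exI[of _ 0]) simp
  next
    case (step y z)
    then obtain k where k: "k \<le> T" "y = w k" by blast
    have "(w k, z) \<in> R k \<or> (w k, z) \<in> R (Suc k)" using step(2) k by (auto simp: R_def)
    then show ?case
    proof
      assume h: "(w k, z) \<in> R k"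
      then have "k \<noteq> T" using noR by blast
      then show ?thesis using h w_step k by (intro exI[of _ "Suc k"]) auto
    next
      assume h: "(w k, z) \<in> R (Suc k)"
      have "k \<noteq> 0"
      proof
        assume "k = 0"
        with h have "(u, z) \<in> B" by (simp add: R_def)
        with uB show False by blast
      qed
      then obtain k1 where k1: "k = Suc k1" by (cases k) auto
      then have "(w k, w k1) \<in> R (Suc k)" using ok_edge[OF T(1), of k1] k R_sym by (simp add: R_SS)
      then have "z = w k1" using h R_fun by blast
      then show ?thesis using k k1 by (intro exI[of _ k1]) simp
    qed
  qed
  have mid: "0 < k \<Longrightarrow> k < T \<Longrightarrow> \<not> xo (w k)" for k
  proof -
    assume k: "0 < k" "k < T"
    then obtain k1 where k1: "k = Suc k1" by (cases k) auto
    have "(w k, w (Suc k)) \<in> R k" using ok_edge[OF T(1)] k by simp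
    moreover have "(w k, w k1) \<in> R k1" using ok_edge[OF T(1), of k1] k k1 R_sym by simp
    ultimately show ?thesis using k1 by (auto simp: xo_def R_def split: if_splits)
  qed
  show ?thesis
  proof (intro exI[of _ "w T"] conjI allI impI)
    show "(u, w T) \<in> (A \<union> B)\<^sup>*" using conn by simp
    fix z assume "(u, z) \<in> (A \<union> B)\<^sup>*" "xo z"
    then obtain k where "k \<le> T" "z = w k" using clo by blast
    then show "z = u \<or> z = w T" using mid \<open>xo z\<close>
      by (metis le_neq_implies_less not_gr_zero w.simps(1))
  qed (use ne xT in auto)
qed

end

lemma walk_main1:
  assumes "pm A" "pm B" "finite A" "finite B" "\<exists>y. (u, y) \<in> A" "\<not> (\<exists>y. (u, y) \<in> B)"
  shows "\<exists>v. v \<noteq> u \<and> ((\<exists>y. (v, y) \<in> A) \<noteq> (\<exists>y. (v, y) \<in> B)) \<and> (u, v) \<in> (A \<union> B)\<^sup>* \<and>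
     (\<forall>z. (u, z) \<in> (A \<union> B)\<^sup>* \<longrightarrow> ((\<exists>y. (z, y) \<in> A) \<noteq> (\<exists>y. (z, y) \<in> B)) \<longrightarrow> z = u \<or> z = v)"
proof -
  interpret walk A B u using assms by unfold_locales
  show ?thesis using main unfolding xo_def .
qed

lemma walk_main:
  assumes "pm A" "pm B" "finite A" "finite B" "(\<exists>y. (u, y) \<in> A) \<noteq> (\<exists>y. (u, y) \<in> B)"
  shows "\<exists>v. v \<noteq> u \<and> ((\<exists>y. (v, y) \<in> A) \<noteq> (\<exists>y. (v, y) \<in> B)) \<and> (u, v) \<in> (A \<union> B)\<^sup>* \<and>
     (\<forall>z. (u, z) \<in> (A \<union> B)\<^sup>* \<longrightarrow> ((\<exists>y. (z, y) \<in> A) \<noteq> (\<exists>y. (z, y) \<in> B)) \<longrightarrow> z = u \<or> z = v)"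
proof (cases "\<exists>y. (u, y) \<in> A")
  case True
  then show ?thesis using walk_main1[OF assms(1-4)] assms(5) by blast
next
  case False
  then have "\<exists>y. (u, y) \<in> B" using assms(5) by blast
  from walk_main1[OF assms(2,1,4,3) this False] show ?thesis
    by (simp add: Un_commute) metis
qed


definition matching :: "'v set \<Rightarrow> 'v set set \<Rightarrow> bool" where
  "matching S M \<longleftrightarrow> (\<forall>e\<in>M. card e = 2 \<and> e \<subseteq> S) \<and> (\<forall>x\<in>S. \<exists>!e\<in>M. x \<in> e)"

definition invol :: "'v set \<Rightarrow> ('v \<Rightarrow> 'v) \<Rightarrow> bool" where
  "invol S \<sigma> \<longleftrightarrow> (\<forall>z\<in>S. \<sigma> z \<in> S \<and> \<sigma> z \<noteq> z \<and> \<sigma> (\<sigma> z) = z)"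

definition PM :: "'v set \<Rightarrow> ('v \<Rightarrow> 'v) \<Rightarrow> 'v set set set" where
  "PM S \<sigma> = {M. matching S M \<and> (\<forall>e\<in>M. \<sigma> ` e \<in> M)}"

lemma PM_finite: "finite S \<Longrightarrow> finite (PM S \<sigma>)"
  by (rule finite_subset[of _ "Pow (Pow S)"]) (auto simp: PM_def matching_def)

lemma sigma_sigma_img: "\<forall>z\<in>S. \<sigma> (\<sigma> z) = z \<Longrightarrow> e \<subseteq> S \<Longrightarrow> \<sigma> ` \<sigma> ` e = e"
  by (force simp: image_image)

lemma split_PM:
  assumes inv: "invol S \<sigma>" and mU: "matching U E" and US: "U \<subseteq> S"
    and Ecl: "\<forall>e\<in>E. \<sigma> ` e \<in> E" and Ucl: "\<forall>z\<in>U. \<sigma> z \<in> U"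
  shows "bij_betw (\<lambda>M'. M' \<union> E) (PM (S - U) \<sigma>) {M \<in> PM S \<sigma>. E \<subseteq> M}"
proof -
  have Ene: "e \<noteq> {}" if "e \<in> E" for e using mU that unfolding matching_def by force
  have EU: "e \<subseteq> U" if "e \<in> E" for e using mU that unfolding matching_def by blast
  have disj: "M' \<inter> E = {}" if "M' \<in> PM (S - U) \<sigma>" for M'
  proof -
    { fix e assume "e \<in> M'" "e \<in> E"
      then have "e \<subseteq> S - U" "e \<subseteq> U" "e \<noteq> {}" using that EU Ene unfolding PM_def matching_def by auto
      then have False by blast }
    then show ?thesis by blast
  qed
  show ?thesis
  proof (rule bij_betw_imageI)
    show "inj_on (\<lambda>M'. M' \<union> E) (PM (S - U) \<sigma>)"
    proof (rule inj_onI)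
      fix M1 M2 assume "M1 \<in> PM (S - U) \<sigma>" "M2 \<in> PM (S - U) \<sigma>" "M1 \<union> E = M2 \<union> E"
      with disj[of M1] disj[of M2] show "M1 = M2" by blast
    qed
  next
    show "(\<lambda>M'. M' \<union> E) ` PM (S - U) \<sigma> = {M \<in> PM S \<sigma>. E \<subseteq> M}"
    proof (intro equalityI subsetI)
      fix M assume "M \<in> (\<lambda>M'. M' \<union> E) ` PM (S - U) \<sigma>"
      then obtain M' where M: "M = M' \<union> E" and M': "M' \<in> PM (S - U) \<sigma>" by blast
      have mM': "matching (S - U) M'" and clM': "\<forall>e\<in>M'. \<sigma> ` e \<in> M'" using M' unfolding PM_def by auto
      have m1: "card e = 2 \<and> e \<subseteq> S" if "e \<in> M" for e
      proof (cases "e \<in> E")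
        case True then show ?thesis using mU US unfolding matching_def by blast
      next
        case False then have "e \<in> M'" using that M by blast
        then show ?thesis using mM' unfolding matching_def by blast
      qed
      have m2: "\<exists>!e. e \<in> M \<and> z \<in> e" if "z \<in> S" for z
      proof (cases "z \<in> U")
        case True
        then have "\<exists>!e. e \<in> E \<and> z \<in> e" using mU unfolding matching_def by blast
        then obtain e where e: "e \<in> E" "z \<in> e" and eu: "\<And>e'. e' \<in> E \<Longrightarrow> z \<in> e' \<Longrightarrow> e' = e" by blast
        have n: "z \<notin> e'" if "e' \<in> M'" for e'
          using mM' that True unfolding matching_def by blast
        show ?thesis
        proof (rule ex1I[of _ e])
          show "e \<in> M \<and> z \<in> e" using e M by blast
          fix e' assume "e' \<in> M \<and> z \<in> e'"
          then show "e' = e" using n eu M by blast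
        qed
      next
        case False
        then have "z \<in> S - U" using that by blast
        then have "\<exists>!e. e \<in> M' \<and> z \<in> e" using mM' unfolding matching_def by blast
        then obtain e where e: "e \<in> M'" "z \<in> e" and eu: "\<And>e'. e' \<in> M' \<Longrightarrow> z \<in> e' \<Longrightarrow> e' = e" by blast
        have n: "z \<notin> e'" if "e' \<in> E" for e'
          using EU that False by blast
        show ?thesis
        proof (rule ex1I[of _ e])
          show "e \<in> M \<and> z \<in> e" using e M by blast
          fix e' assume "e' \<in> M \<and> z \<in> e'"
          then show "e' = e" using n eu M by blast
        qed
      qed
      have cl: "\<sigma> ` e \<in> M" if "e \<in> M" for e
        using that M clM' Ecl by blast
      have "matching S M" unfolding matching_def using m1 m2 by blast
      then show "M \<in> {M \<in> PM S \<sigma>. E \<subseteq> M}" using cl M unfolding PM_def by blast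
    next
      fix M assume "M \<in> {M \<in> PM S \<sigma>. E \<subseteq> M}"
      then have MP: "M \<in> PM S \<sigma>" and EM: "E \<subseteq> M" by auto
      have mM: "matching S M" and clM: "\<forall>e\<in>M. \<sigma> ` e \<in> M" using MP unfolding PM_def by auto
      have edge: "e \<subseteq> S - U" if "e \<in> M - E" for e
      proof -
        have "e \<subseteq> S" using mM that unfolding matching_def by blast
        moreover have "z \<notin> U" if "z \<in> e" for z
        proof
          assume "z \<in> U"
          then obtain e' where "e' \<in> E" "z \<in> e'" using mU unfolding matching_def by blast
          then have "e' = e" using mM \<open>e \<in> M - E\<close> \<open>z \<in> e\<close> EM US \<open>z \<in> U\<close> unfolding matching_def by blast
          then show False using \<open>e' \<in> E\<close> \<open>e \<in> M - E\<close> by blast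
        qed
        ultimately show ?thesis by blast
      qed
      have "matching (S - U) (M - E)"
        unfolding matching_def
      proof (intro conjI ballI)
        fix e assume "e \<in> M - E"
        then show "card e = 2" "e \<subseteq> S - U" using edge mM unfolding matching_def by auto
      next
        fix z assume z: "z \<in> S - U"
        then obtain e where e: "e \<in> M" "z \<in> e" "\<forall>e'\<in>M. z \<in> e' \<longrightarrow> e' = e" using mM unfolding matching_def by (metis Diff_iff)
        have "e \<notin> E" using EU e z by blast
        then show "\<exists>!e. e \<in> M - E \<and> z \<in> e" using e by blast
      qed
      moreover have "\<forall>e\<in>M - E. \<sigma> ` e \<in> M - E"
      proof
        fix e assume e: "e \<in> M - E"
        have "\<sigma> ` e \<notin> E"
        proof
          assume "\<sigma> ` e \<in> E"
          then have "\<sigma> ` \<sigma> ` e \<in> E" using Ecl by blast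
          moreover have "\<sigma> ` \<sigma> ` e = e"
            using inv edge[OF e] by (intro sigma_sigma_img) (auto simp: invol_def)
          ultimately show False using e by simp
        qed
        then show "\<sigma> ` e \<in> M - E" using clM e by blast
      qed
      ultimately have "M - E \<in> PM (S - U) \<sigma>" unfolding PM_def by blast
      moreover have "M = (M - E) \<union> E" using EM by blast
      ultimately show "M \<in> (\<lambda>M'. M' \<union> E) ` PM (S - U) \<sigma>" by blast
    qed
  qed
qed

lemma invol_sub:
  assumes "invol S \<sigma>" "\<forall>z\<in>U. \<sigma> z \<in> U"
  shows "invol (S - U) \<sigma>"
  using assms unfolding invol_def by (metis Diff_iff)

lemma card_PM:
  "finite S \<Longrightarrow> invol S \<sigma> \<Longrightarrow> card S = 2 * m \<Longrightarrow> card (PM S \<sigma>) = a_seq m"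
proof (induction m arbitrary: S rule: less_induct)
  case (less m)
  show ?case
  proof (cases m)
    case 0
    then have S: "S = {}" using less.prems by simp
    have "PM S \<sigma> = {{}}"
    proof -
      have "M = {}" if "matching {} M" for M :: "'a set set"
      proof (rule ccontr)
        assume "M \<noteq> {}"
        then obtain e where "e \<in> M" by blast
        then have "card e = 2" "e \<subseteq> {}" using that unfolding matching_def by auto
        then show False by simp
      qed
      then show ?thesis using S by (auto simp: PM_def matching_def)
    qed
    then show ?thesis using 0 by simp
  next
    case (Suc m1)
    have fin: "finite S" and inv: "invol S \<sigma>" using less.prems by auto
    have "S \<noteq> {}" using less.prems Suc by auto
    then obtain x where x: "x \<in> S" by blast
    have sx: "\<sigma> x \<in> S" "\<sigma> x \<noteq> x" "\<sigma> (\<sigma> x) = x" using inv x unfolding invol_def by auto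
    define S' where "S' = S - {x, \<sigma> x}"
    have cS': "card S' = 2 * m1" using less.prems Suc sx x unfolding S'_def by (simp add: card_Diff_subset)
    have invS': "invol S' \<sigma>" unfolding S'_def using invol_sub[OF inv, of "{x, \<sigma> x}"] sx by auto
    have finS': "finite S'" using fin S'_def by simp
    define A where "A = {M \<in> PM S \<sigma>. {{x, \<sigma> x}} \<subseteq> M}"
    define B where "B y = {M \<in> PM S \<sigma>. {{x, y}, {\<sigma> x, \<sigma> y}} \<subseteq> M}" for y
    have cardA: "card A = a_seq m1"
    proof -
      have "matching {x, \<sigma> x} {{x, \<sigma> x}}" using sx by (auto simp: matching_def)
      then have "bij_betw (\<lambda>M'. M' \<union> {{x, \<sigma> x}}) (PM S' \<sigma>) A"
        unfolding A_def S'_def using sx x by (intro split_PM[OF inv]) auto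
      then have "card A = card (PM S' \<sigma>)" by (simp add: bij_betw_same_card)
      also have "\<dots> = a_seq m1" using less.IH[OF _ finS' invS' cS'] Suc by simp
      finally show ?thesis .
    qed
    have cardB: "card (B y) = a_seq (m1 - 1)" if y: "y \<in> S'" for y
    proof -
      have sy: "y \<in> S" "\<sigma> y \<in> S" "\<sigma> y \<noteq> y" "\<sigma> (\<sigma> y) = y" "y \<noteq> x" "y \<noteq> \<sigma> x"
        using inv y unfolding invol_def S'_def by auto
      have d: "\<sigma> y \<noteq> x" "\<sigma> y \<noteq> \<sigma> x"
      proof -
        show "\<sigma> y \<noteq> x"
        proof
          assume "\<sigma> y = x" then have "\<sigma> (\<sigma> y) = \<sigma> x" by simp
          then show False using sy by simp
        qed
        show "\<sigma> y \<noteq> \<sigma> x"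
        proof
          assume "\<sigma> y = \<sigma> x" then have "\<sigma> (\<sigma> y) = \<sigma> (\<sigma> x)" by simp
          then show False using sy sx by simp
        qed
      qed
      define U where "U = {x, \<sigma> x, y, \<sigma> y}"
      have cU: "card U = 4" using sx sy d unfolding U_def by auto
      have m: "matching U {{x, y}, {\<sigma> x, \<sigma> y}}" using sx sy d unfolding U_def matching_def by auto
      have "bij_betw (\<lambda>M'. M' \<union> {{x, y}, {\<sigma> x, \<sigma> y}}) (PM (S - U) \<sigma>) (B y)"
        unfolding B_def using sx sy x unfolding U_def by (intro split_PM[OF inv m[unfolded U_def]]) auto
      then have "card (B y) = card (PM (S - U) \<sigma>)" by (simp add: bij_betw_same_card)
      also have "\<dots> = a_seq (m1 - 1)"
      proof (rule less.IH)
        show "m1 - 1 < m" using Suc by simp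
        show "finite (S - U)" using fin by simp
        show "invol (S - U) \<sigma>" using invol_sub[OF inv, of U] sx sy unfolding U_def by auto
        have "U \<subseteq> S" using sx sy x unfolding U_def by auto
        then have "card (S - U) = card S - 4" using cU fin by (simp add: card_Diff_subset finite_subset)
        moreover have "m1 \<ge> 1" using cS' y finS' by (cases m1) auto
        ultimately show "card (S - U) = 2 * (m1 - 1)" using less.prems Suc by simp
      qed
      finally show ?thesis .
    qed
    have decomp: "PM S \<sigma> = A \<union> (\<Union>y\<in>S'. B y)"
    proof (intro equalityI subsetI)
      fix M assume MP: "M \<in> PM S \<sigma>"
      then have mM: "matching S M" and clM: "\<forall>e\<in>M. \<sigma> ` e \<in> M" unfolding PM_def by auto
      then obtain e where e: "e \<in> M" "x \<in> e" using x unfolding matching_def by blast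
      then have "card e = 2" "e \<subseteq> S" using mM unfolding matching_def by auto
      then obtain a b where ab: "e = {a, b}" "a \<noteq> b" by (auto simp: card_2_iff)
      define y where "y = (if x = a then b else a)"
      have ey: "e = {x, y}" "y \<noteq> x" "y \<in> S"
        using ab e \<open>e \<subseteq> S\<close> unfolding y_def by auto
      have se: "\<sigma> ` e = {\<sigma> x, \<sigma> y}" using ey by simp
      show "M \<in> A \<union> (\<Union>y\<in>S'. B y)"
      proof (cases "y = \<sigma> x")
        case True
        then show ?thesis using MP e ey unfolding A_def by auto
      next
        case False
        then have "y \<in> S'" using ey unfolding S'_def by auto
        moreover have "M \<in> B y" using MP e ey clM se unfolding B_def by auto
        ultimately show ?thesis by blast
      qed
    qed (auto simp: A_def B_def)
    have uniq: "e1 = e2" if "M \<in> PM S \<sigma>" "e1 \<in> M" "e2 \<in> M" "x \<in> e1" "x \<in> e2" for M e1 e2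
      using that x unfolding PM_def matching_def by blast
    have finP: "finite (PM S \<sigma>)" using PM_finite[OF fin] .
    have "card (PM S \<sigma>) = card A + card (\<Union>y\<in>S'. B y)"
    proof (subst decomp, rule card_Un_disjoint)
      show "finite A" using finP unfolding A_def by simp
      show "finite (\<Union>y\<in>S'. B y)" using finP finS' unfolding B_def by auto
      show "A \<inter> (\<Union>y\<in>S'. B y) = {}"
      proof (rule ccontr)
        assume "\<not> ?thesis"
        then obtain M y where "M \<in> A" "y \<in> S'" "M \<in> B y" by blast
        then have "{x, \<sigma> x} = {x, y}" using uniq[of M "{x, \<sigma> x}" "{x, y}"] unfolding A_def B_def by auto
        then show False using \<open>y \<in> S'\<close> unfolding S'_def by (auto simp: doubleton_eq_iff)
      qed
    qed
    also have "card (\<Union>y\<in>S'. B y) = (\<Sum>y\<in>S'. card (B y))"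
    proof (rule card_UN_disjoint[OF finS'])
      show "\<forall>i\<in>S'. finite (B i)" using finP unfolding B_def by auto
      show "\<forall>i\<in>S'. \<forall>j\<in>S'. i \<noteq> j \<longrightarrow> B i \<inter> B j = {}"
      proof (intro ballI impI)
        fix i j assume ij: "i \<in> S'" "j \<in> S'" "i \<noteq> j"
        show "B i \<inter> B j = {}"
        proof (rule ccontr)
          assume "\<not> ?thesis"
          then obtain M where "M \<in> B i" "M \<in> B j" by blast
          then have "{x, i} = {x, j}" using uniq[of M "{x, i}" "{x, j}"] unfolding B_def by auto
          then show False using ij by (auto simp: doubleton_eq_iff)
        qed
      qed
    qed
    also have "(\<Sum>y\<in>S'. card (B y)) = 2 * m1 * a_seq (m1 - 1)"
      using cardB cS' by simp
    finally have "card (PM S \<sigma>) = a_seq m1 + 2 * m1 * a_seq (m1 - 1)" using cardA by simp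
    then show ?thesis using Suc by (cases m1) auto
  qed
qed


interpretation brm: module "br_scale :: 'a::comm_ring_1 \<Rightarrow> (diagram \<Rightarrow> 'a) \<Rightarrow> _"
  by unfold_locales (auto simp: br_scale_def fun_eq_iff algebra_simps)

lemma sum_fun_apply: "finite A \<Longrightarrow> (\<Sum>v\<in>A. f v) (x::'b) = (\<Sum>v\<in>A. f v x)"
  by (induction A rule: finite_induct) auto

lemma span_basis:
  assumes "finite F"
  shows "brm.span (basis_elt ` F :: (diagram \<Rightarrow> 'a::comm_ring_1) set) = {x. \<forall>D. D \<notin> F \<longrightarrow> x D = 0}"
proof
  show "brm.span (basis_elt ` F :: (diagram \<Rightarrow> 'a) set) \<subseteq> {x. \<forall>D. D \<notin> F \<longrightarrow> x D = 0}"
  proof (rule brm.span_minimal)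
    show "basis_elt ` F \<subseteq> {x :: diagram \<Rightarrow> 'a. \<forall>D. D \<notin> F \<longrightarrow> x D = 0}"
      unfolding basis_elt_def by auto
    show "brm.subspace {x :: diagram \<Rightarrow> 'a. \<forall>D. D \<notin> F \<longrightarrow> x D = 0}"
      unfolding brm.subspace_def by (simp add: br_scale_def)
  qed
next
  show "{x. \<forall>D. D \<notin> F \<longrightarrow> x D = 0} \<subseteq> brm.span (basis_elt ` F :: (diagram \<Rightarrow> 'a) set)"
  proof
    fix x :: "diagram \<Rightarrow> 'a" assume x: "x \<in> {x. \<forall>D. D \<notin> F \<longrightarrow> x D = 0}"
    have "x = (\<Sum>D\<in>F. br_scale (x D) (basis_elt D))"
    proof
      fix E
      have "(\<Sum>D\<in>F. br_scale (x D) (basis_elt D)) E = (\<Sum>D\<in>F. x D * (if E = D then 1 else 0))"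
        using assms by (simp add: sum_fun_apply br_scale_def basis_elt_def)
      also have "\<dots> = (\<Sum>D\<in>F. if E = D then x E else 0)" by (rule sum.cong) auto
      also have "\<dots> = x E" using x by (cases "E \<in> F") (simp_all add: sum.delta'[OF assms])
      finally show "x E = (\<Sum>D\<in>F. br_scale (x D) (basis_elt D)) E" by simp
    qed
    also have "\<dots> \<in> brm.span (basis_elt ` F)"
      by (intro brm.span_sum brm.span_scale brm.span_base) auto
    finally show "x \<in> brm.span (basis_elt ` F)" .
  qed
qed

lemma indep_basis:
  "\<not> brm.dependent (basis_elt ` F :: (diagram \<Rightarrow> 'a::comm_ring_1) set)"
proof
  assume "brm.dependent (basis_elt ` F :: (diagram \<Rightarrow> 'a) set)"
  then obtain t u where t: "finite t" "t \<subseteq> basis_elt ` F" and s: "(\<Sum>v\<in>t. br_scale (u v) v) = (0::diagram \<Rightarrow> 'a)"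
    and v0: "\<exists>v\<in>t. u v \<noteq> 0"
    unfolding brm.dependent_explicit by blast
  obtain D0 where D0: "basis_elt D0 \<in> t" "u (basis_elt D0) \<noteq> 0" using v0 t by auto
  have "0 = (\<Sum>v\<in>t. br_scale (u v) v) D0" using s by simp
  also have "\<dots> = (\<Sum>v\<in>t. u v * v D0)" using t by (simp add: sum_fun_apply br_scale_def)
  also have "\<dots> = u (basis_elt D0) * basis_elt D0 D0 + (\<Sum>v\<in>t - {basis_elt D0}. u v * v D0)"
    using t D0 by (simp add: sum.remove)
  also have "(\<Sum>v\<in>t - {basis_elt D0}. u v * v D0) = 0"
  proof (rule sum.neutral, rule ballI)
    fix v assume "v \<in> t - {basis_elt D0}"
    then obtain D where "v = basis_elt D" "D \<noteq> D0" using t by blast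
    then show "u v * v D0 = 0" by (simp add: basis_elt_def)
  qed
  finally show False using D0 by (simp add: basis_elt_def)
qed

lemma inj_basis: "inj (basis_elt :: diagram \<Rightarrow> diagram \<Rightarrow> 'a::comm_ring_1)"
proof (rule injI)
  fix D E assume "(basis_elt D :: diagram \<Rightarrow> 'a) = basis_elt E"
  then have "(basis_elt D :: diagram \<Rightarrow> 'a) D = basis_elt E D" by simp
  then show "D = E" by (simp add: basis_elt_def split: if_splits)
qed


lemma brauer_matching: "brauer_diagrams N = {M. matching (dots N) M}"
  by (simp add: brauer_diagrams_def matching_def)

definition erel :: "(dot \<Rightarrow> nat \<times> nat) \<Rightarrow> diagram \<Rightarrow> ((nat \<times> nat) \<times> (nat \<times> nat)) set" where
  "erel f d = {(f x, f y) | x y. {x, y} \<in> d \<and> x \<noteq> y}"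

lemma stack_edges_erel: "stack_edges d1 d2 = erel up1 d1 \<union> erel up2 d2"
  by (simp add: stack_edges_def erel_def)

lemma matching_partner:
  assumes "matching S d" "x \<in> S"
  shows "\<exists>y. {x, y} \<in> d \<and> x \<noteq> y"
proof -
  obtain e where e: "e \<in> d" "x \<in> e" using assms unfolding matching_def by blast
  then have "card e = 2" using assms unfolding matching_def by blast
  then obtain a b where ab: "e = {a, b}" "a \<noteq> b" by (auto simp: card_2_iff)
  define y where "y = (if x = a then b else a)"
  have "e = {x, y}" "x \<noteq> y" using ab e unfolding y_def by auto
  then show ?thesis using e by blast
qed

lemma matching_edge_in: "matching S d \<Longrightarrow> {x, y} \<in> d \<Longrightarrow> x \<in> S \<and> y \<in> S"
  unfolding matching_def by blast

lemma pm_erel: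
  assumes m: "matching S d" and inj: "inj f"
  shows "pm (erel f d)"
  unfolding pm_def
proof (intro conjI allI impI)
  show "sym (erel f d)" unfolding sym_def
  proof (intro allI impI)
    fix a b assume "(a, b) \<in> erel f d"
    then obtain x y where xy: "a = f x" "b = f y" "{x, y} \<in> d" "x \<noteq> y" unfolding erel_def by blast
    then have "{y, x} \<in> d" "y \<noteq> x" by (auto simp: insert_commute)
    then show "(b, a) \<in> erel f d" unfolding erel_def using xy by blast
  qed
next
  fix z show "(z, z) \<notin> erel f d" unfolding erel_def using inj by (auto dest: injD)
next
  fix a b c assume ab: "(a, b) \<in> erel f d" and ac: "(a, c) \<in> erel f d"
  from ab obtain x y where xy: "a = f x" "b = f y" "{x, y} \<in> d" "x \<noteq> y" unfolding erel_def by blast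
  from ac obtain x' z where xz: "a = f x'" "c = f z" "{x', z} \<in> d" "x' \<noteq> z" unfolding erel_def by blast
  have "x' = x" using xy xz inj by (auto dest: injD)
  then have "x \<in> S" using matching_edge_in[OF m xy(3)] by blast
  then have "{x, y} = {x, z}" using m xy xz \<open>x' = x\<close> unfolding matching_def by blast
  then have "y = z" using xy xz \<open>x' = x\<close> by (auto simp: doubleton_eq_iff)
  then show "b = c" using xy xz by simp
qed

lemma finite_erel:
  assumes m: "matching S d" and fin: "finite S"
  shows "finite (erel f d)"
proof (rule finite_subset)
  show "erel f d \<subseteq> f ` S \<times> f ` S" unfolding erel_def using matching_edge_in[OF m] by blast
  show "finite (f ` S \<times> f ` S)" using fin by simp
qed

lemma inj_up1: "inj up1" by (rule injI) (auto simp: up1_def prod_eq_iff split: if_splits)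
lemma inj_up2: "inj up2" by (rule injI) (auto simp: up2_def prod_eq_iff split: if_splits)
lemma inj_outer: "inj outer" by (rule injI) (auto simp: outer_def prod_eq_iff split: if_splits)

lemma finite_dots: "finite (dots N)" by (simp add: dots_def)

lemma erel_dom:
  assumes "matching S d" "(a, b) \<in> erel f d"
  shows "\<exists>x\<in>S. a = f x"
  using assms matching_edge_in[OF assms(1)] unfolding erel_def by blast

lemma erel_has:
  assumes "matching S d" "x \<in> S"
  shows "\<exists>b. (f x, b) \<in> erel f d"
  using matching_partner[OF assms] unfolding erel_def by blast

lemma concat_partner:
  assumes d1: "d1 \<in> brauer_diagrams N" and d2: "d2 \<in> brauer_diagrams N" and x: "x \<in> dots N"
  shows "\<exists>y. y \<in> dots N \<and> y \<noteq> x \<and> (outer x, outer y) \<in> stack_conn d1 d2 \<and>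
     (\<forall>y'. y' \<in> dots N \<longrightarrow> (outer x, outer y') \<in> stack_conn d1 d2 \<longrightarrow> y' = x \<or> y' = y)"
proof -
  define A where "A = erel up1 d1"
  define B where "B = erel up2 d2"
  have m1: "matching (dots N) d1" and m2: "matching (dots N) d2" using d1 d2 brauer_matching by auto
  have pA: "pm A" "finite A" unfolding A_def using pm_erel[OF m1 inj_up1] finite_erel[OF m1 finite_dots] by auto
  have pB: "pm B" "finite B" unfolding B_def using pm_erel[OF m2 inj_up2] finite_erel[OF m2 finite_dots] by auto
  let ?X = "\<lambda>z. (\<exists>y. (z, y) \<in> A) \<noteq> (\<exists>y. (z, y) \<in> B)"
  have Alev: "(\<exists>b. (v, b) \<in> A) \<longleftrightarrow> (\<exists>z\<in>dots N. v = up1 z)" for v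
    using erel_dom[OF m1] erel_has[OF m1] unfolding A_def by blast
  have Blev: "(\<exists>b. (v, b) \<in> B) \<longleftrightarrow> (\<exists>z\<in>dots N. v = up2 z)" for v
    using erel_dom[OF m2] erel_has[OF m2] unfolding B_def by blast
  have dots_iff: "(j, b) \<in> dots N \<longleftrightarrow> j \<in> {1..N}" for j b by (simp add: dots_def)
  have Xouter: "?X (outer z)" if "z \<in> dots N" for z
  proof (cases "snd z")
    case True
    then have "outer z = up1 z" by (simp add: outer_def up1_def)
    moreover have "\<not> (\<exists>z'\<in>dots N. up1 z = up2 z')" using True by (auto simp: up1_def up2_def)
    ultimately show ?thesis using Alev Blev that by metis
  next
    case False
    then have "outer z = up2 z" by (simp add: outer_def up2_def)
    moreover have "\<not> (\<exists>z'\<in>dots N. up2 z = up1 z')" using False by (auto simp: up1_def up2_def)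
    ultimately show ?thesis using Alev Blev that by metis
  qed
  have Xinv: "\<exists>z\<in>dots N. v = outer z" if "?X v" for v
  proof (cases "\<exists>b. (v, b) \<in> A")
    case True
    then obtain z where z: "z \<in> dots N" "v = up1 z" using Alev by blast
    show ?thesis
    proof (cases "snd z")
      case True then show ?thesis using z by (intro bexI[of _ z]) (auto simp: outer_def up1_def)
    next
      case False
      have "(fst z, True) \<in> dots N" using z(1) by (cases z) (simp add: dots_def)
      moreover have "v = up2 (fst z, True)" using z False by (simp add: up1_def up2_def)
      ultimately have "\<exists>b. (v, b) \<in> B" using Blev by blast
      then show ?thesis using that True by blast
    qed
  next
    case False
    then have "\<exists>b. (v, b) \<in> B" using that by blast
    then obtain z where z: "z \<in> dots N" "v = up2 z" using Blev by blast
    show ?thesis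
    proof (cases "snd z")
      case False then show ?thesis using z by (intro bexI[of _ z]) (auto simp: outer_def up2_def)
    next
      case True
      have "(fst z, False) \<in> dots N" using z(1) by (cases z) (simp add: dots_def)
      moreover have "v = up1 (fst z, False)" using z True by (simp add: up1_def up2_def)
      ultimately have "\<exists>b. (v, b) \<in> A" using Alev by blast
      then show ?thesis using False by blast
    qed
  qed
  have conn: "stack_conn d1 d2 = (A \<union> B)\<^sup>*" unfolding stack_conn_def stack_edges_erel A_def B_def ..
  obtain v where v: "v \<noteq> outer x" "?X v" "(outer x, v) \<in> (A \<union> B)\<^sup>*"
    and vu: "\<forall>z. (outer x, z) \<in> (A \<union> B)\<^sup>* \<longrightarrow> ?X z \<longrightarrow> z = outer x \<or> z = v"
    using walk_main[OF pA(1) pB(1) pA(2) pB(2) Xouter[OF x]] by blast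
  obtain y where y: "y \<in> dots N" "v = outer y" using Xinv[OF v(2)] by blast
  show ?thesis
  proof (intro exI[of _ y] conjI allI impI)
    show "y \<in> dots N" by fact
    show "y \<noteq> x" using v(1) y by auto
    show "(outer x, outer y) \<in> stack_conn d1 d2" using v(3) y conn by simp
    fix y' assume y': "y' \<in> dots N" "(outer x, outer y') \<in> stack_conn d1 d2"
    then have "(outer x, outer y') \<in> (A \<union> B)\<^sup>*" using conn by simp
    then have "outer y' = outer x \<or> outer y' = v" using vu Xouter[OF y'(1)] by blast
    then show "y' = x \<or> y' = y" using y inj_outer by (auto dest: injD)
  qed
qed

lemma stack_conn_sym:
  assumes "d1 \<in> brauer_diagrams N" "d2 \<in> brauer_diagrams N" "(a, b) \<in> stack_conn d1 d2"
  shows "(b, a) \<in> stack_conn d1 d2"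
proof -
  have m1: "matching (dots N) d1" and m2: "matching (dots N) d2" using assms brauer_matching by auto
  have "sym (stack_edges d1 d2)" unfolding stack_edges_erel
    using pm_erel[OF m1 inj_up1] pm_erel[OF m2 inj_up2] unfolding pm_def by (auto intro: sym_Un)
  then have "sym (stack_conn d1 d2)" unfolding stack_conn_def by (rule sym_rtrancl)
  then show ?thesis using assms(3) unfolding sym_def by blast
qed

lemma concat_brauer:
  assumes d1: "d1 \<in> brauer_diagrams N" and d2: "d2 \<in> brauer_diagrams N"
  shows "concat N d1 d2 \<in> brauer_diagrams N"
  unfolding brauer_matching mem_Collect_eq matching_def
proof (intro conjI ballI)
  fix e assume "e \<in> concat N d1 d2"
  then obtain x y where "e = {x, y}" "x \<in> dots N" "y \<in> dots N" "x \<noteq> y" unfolding concat_def by blast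
  then show "card e = 2" "e \<subseteq> dots N" by auto
next
  fix z assume z: "z \<in> dots N"
  obtain y where y: "y \<in> dots N" "y \<noteq> z" "(outer z, outer y) \<in> stack_conn d1 d2"
    and yu: "\<forall>y'. y' \<in> dots N \<longrightarrow> (outer z, outer y') \<in> stack_conn d1 d2 \<longrightarrow> y' = z \<or> y' = y"
    using concat_partner[OF d1 d2 z] by blast
  show "\<exists>!e. e \<in> concat N d1 d2 \<and> z \<in> e"
  proof (rule ex1I[of _ "{z, y}"])
    show "{z, y} \<in> concat N d1 d2 \<and> z \<in> {z, y}" using y z unfolding concat_def by blast
    fix e assume "e \<in> concat N d1 d2 \<and> z \<in> e"
    then obtain a b where e: "e = {a, b}" "a \<in> dots N" "b \<in> dots N" "a \<noteq> b"
      "(outer a, outer b) \<in> stack_conn d1 d2" "z \<in> e" unfolding concat_def by blast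
    show "e = {z, y}"
    proof (cases "z = a")
      case True
      then have "b = y" using yu e by blast
      then show ?thesis using e True by simp
    next
      case False
      then have "z = b" using e by blast
      then have "(outer z, outer a) \<in> stack_conn d1 d2" using stack_conn_sym[OF d1 d2 e(5)] by simp
      then have "a = y" using yu e False by blast
      then show ?thesis using e \<open>z = b\<close> by auto
    qed
  qed
qed


lemma sym_iff_closed:
  assumes "\<forall>z\<in>S. \<sigma> z \<in> S \<and> \<sigma> (\<sigma> z) = z" "\<forall>e\<in>M. e \<subseteq> S"
  shows "(\<lambda>e. \<sigma> ` e) ` M = M \<longleftrightarrow> (\<forall>e\<in>M. \<sigma> ` e \<in> M)"
proof
  assume "(\<lambda>e. \<sigma> ` e) ` M = M" then show "\<forall>e\<in>M. \<sigma> ` e \<in> M" by blast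
next
  assume cl: "\<forall>e\<in>M. \<sigma> ` e \<in> M"
  show "(\<lambda>e. \<sigma> ` e) ` M = M"
  proof
    show "(\<lambda>e. \<sigma> ` e) ` M \<subseteq> M" using cl by blast
    show "M \<subseteq> (\<lambda>e. \<sigma> ` e) ` M"
    proof
      fix e assume e: "e \<in> M"
      then have "e \<subseteq> S" using assms by blast
      then have "\<sigma> ` \<sigma> ` e = e" using sigma_sigma_img[of S \<sigma> e] assms(1) by blast
      then show "e \<in> (\<lambda>e. \<sigma> ` e) ` M" using cl e by (metis image_eqI)
    qed
  qed
qed

lemma reflect_dots: "z \<in> dots N \<Longrightarrow> reflect N z \<in> dots N \<and> reflect N (reflect N z) = z"
  by (cases z) (auto simp: dots_def reflect_def)

lemma reflect_ne:
  assumes "even N" "z \<in> dots N" shows "reflect N z \<noteq> z"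
proof
  assume h: "reflect N z = z"
  obtain a b where z: "z = (a, b)" by (cases z)
  then have "N + 1 - a = a" "a \<le> N" using h assms(2) by (auto simp: reflect_def dots_def)
  then show False using assms(1) by presburger
qed

lemma sym_diagrams_PM: "sym_diagrams N = PM (dots N) (reflect N)"
proof -
  have "M \<in> sym_diagrams N \<longleftrightarrow> M \<in> PM (dots N) (reflect N)" for M
  proof (cases "matching (dots N) M")
    case True
    then have "\<forall>e\<in>M. e \<subseteq> dots N" unfolding matching_def by blast
    then show ?thesis using True sym_iff_closed[of "dots N" "reflect N" M] reflect_dots
      by (simp add: sym_diagrams_def PM_def brauer_matching symmetric_diagram_def)
  next
    case False then show ?thesis by (simp add: sym_diagrams_def PM_def brauer_matching)
  qed
  then show ?thesis by blast
qed

lemma finite_sym: "finite (sym_diagrams N)"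
  using PM_finite[OF finite_dots] sym_diagrams_PM by simp

lemma sym_closed:
  assumes "d \<in> sym_diagrams N" "{x, y} \<in> d"
  shows "{reflect N x, reflect N y} \<in> d"
  using assms unfolding sym_diagrams_PM PM_def by force

lemma sym_brauer: "d \<in> sym_diagrams N \<Longrightarrow> d \<in> brauer_diagrams N"
  by (simp add: sym_diagrams_def)

definition rho :: "nat \<Rightarrow> nat \<times> nat \<Rightarrow> nat \<times> nat" where
  "rho N a = (N + 1 - fst a, snd a)"

lemma rho_up1: "rho N (up1 x) = up1 (reflect N x)" by (simp add: rho_def up1_def reflect_def)
lemma rho_up2: "rho N (up2 x) = up2 (reflect N x)" by (simp add: rho_def up2_def reflect_def)
lemma rho_outer: "rho N (outer x) = outer (reflect N x)" by (simp add: rho_def outer_def reflect_def)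

lemma erel_rho:
  assumes "d \<in> sym_diagrams N" "(a, b) \<in> erel f d" "\<And>x. rho N (f x) = f (reflect N x)"
  shows "(rho N a, rho N b) \<in> erel f d"
proof -
  obtain x y where xy: "a = f x" "b = f y" "{x, y} \<in> d" "x \<noteq> y" using assms(2) unfolding erel_def by blast
  have m: "matching (dots N) d" using sym_brauer[OF assms(1)] brauer_matching by auto
  have "x \<in> dots N" "y \<in> dots N" using matching_edge_in[OF m xy(3)] by auto
  then have "reflect N x \<noteq> reflect N y" using xy(4) reflect_dots by metis
  moreover have "{reflect N x, reflect N y} \<in> d" using sym_closed[OF assms(1) xy(3)] .
  ultimately have "(f (reflect N x), f (reflect N y)) \<in> erel f d" unfolding erel_def by blast
  then show ?thesis using xy assms(3) by simp
qed

lemma conn_rho: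
  assumes "d1 \<in> sym_diagrams N" "d2 \<in> sym_diagrams N" "(a, b) \<in> stack_conn d1 d2"
  shows "(rho N a, rho N b) \<in> stack_conn d1 d2"
  using assms(3) unfolding stack_conn_def
proof (induction rule: rtrancl_induct)
  case base then show ?case by simp
next
  case (step y z)
  have e1: "(rho N y, rho N z) \<in> erel up1 d1" if "(y, z) \<in> erel up1 d1"
    using erel_rho[of d1 N y z up1] assms(1) that rho_up1 by blast
  have e2: "(rho N y, rho N z) \<in> erel up2 d2" if "(y, z) \<in> erel up2 d2"
    using erel_rho[of d2 N y z up2] assms(2) that rho_up2 by blast
  have "(rho N y, rho N z) \<in> stack_edges d1 d2"
    using step(2) e1 e2 unfolding stack_edges_erel by blast
  with step(3) show ?case by (rule rtrancl.rtrancl_into_rtrancl)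
qed

lemma concat_sym:
  assumes d1: "d1 \<in> sym_diagrams N" and d2: "d2 \<in> sym_diagrams N"
  shows "concat N d1 d2 \<in> sym_diagrams N"
proof -
  have B: "concat N d1 d2 \<in> brauer_diagrams N" using concat_brauer sym_brauer d1 d2 by blast
  have m: "matching (dots N) (concat N d1 d2)" using B brauer_matching by auto
  have cl: "\<forall>e\<in>concat N d1 d2. reflect N ` e \<in> concat N d1 d2"
  proof
    fix e assume "e \<in> concat N d1 d2"
    then obtain x y where xy: "e = {x, y}" "x \<in> dots N" "y \<in> dots N" "x \<noteq> y"
      "(outer x, outer y) \<in> stack_conn d1 d2" unfolding concat_def by blast
    have "(outer (reflect N x), outer (reflect N y)) \<in> stack_conn d1 d2"
      using conn_rho[OF d1 d2 xy(5)] by (simp add: rho_outer)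
    moreover have "reflect N x \<noteq> reflect N y" using xy reflect_dots by metis
    moreover have "reflect N x \<in> dots N" "reflect N y \<in> dots N" using xy reflect_dots by auto
    ultimately have "{reflect N x, reflect N y} \<in> concat N d1 d2" unfolding concat_def by blast
    then show "reflect N ` e \<in> concat N d1 d2" using xy by simp
  qed
  show ?thesis unfolding sym_diagrams_PM PM_def using m cl by blast
qed

lemma id_sym: "id_diagram N \<in> sym_diagrams N"
proof -
  have m: "matching (dots N) (id_diagram N)"
    unfolding matching_def
  proof (intro conjI ballI)
    fix e assume "e \<in> id_diagram N"
    then obtain j where "e = {(j, True), (j, False)}" "j \<in> {1..N}" unfolding id_diagram_def by blast
    then show "card e = 2" "e \<subseteq> dots N" by (auto simp: dots_def)
  next
    fix z assume z: "z \<in> dots N"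
    obtain j b where zj: "z = (j, b)" "j \<in> {1..N}" using z by (cases z) (auto simp: dots_def)
    show "\<exists>!e. e \<in> id_diagram N \<and> z \<in> e"
    proof (rule ex1I[of _ "{(j, True), (j, False)}"])
      show "{(j, True), (j, False)} \<in> id_diagram N \<and> z \<in> {(j, True), (j, False)}"
        using zj unfolding id_diagram_def by (cases b) auto
      fix e assume "e \<in> id_diagram N \<and> z \<in> e"
      then obtain k where "e = {(k, True), (k, False)}" "z \<in> e" unfolding id_diagram_def by blast
      then show "e = {(j, True), (j, False)}" using zj by auto
    qed
  qed
  have "\<forall>e\<in>id_diagram N. reflect N ` e \<in> id_diagram N"
  proof
    fix e assume "e \<in> id_diagram N"
    then obtain j where j: "e = {(j, True), (j, False)}" "j \<in> {1..N}" unfolding id_diagram_def by blast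
    then have "reflect N ` e = {(N + 1 - j, True), (N + 1 - j, False)}" by (simp add: reflect_def)
    moreover have "N + 1 - j \<in> {1..N}" using j by auto
    ultimately show "reflect N ` e \<in> id_diagram N" unfolding id_diagram_def by blast
  qed
  then show ?thesis unfolding sym_diagrams_PM PM_def using m by blast
qed

lemma SBr_eq: "(SBr N :: (diagram \<Rightarrow> 'a::comm_ring_1) set) = {x. \<forall>D. D \<notin> sym_diagrams N \<longrightarrow> x D = 0}"
  unfolding SBr_def using span_basis[OF finite_sym] by simp

theorem mainTheorem2:
  fixes n :: nat and \<delta> :: "'a::comm_ring_1"
  assumes "n \<ge> 1" and "\<delta> dvd 1"
  shows "card (sym_diagrams (2 * n)) = a_seq (2 * n)
    \<and> (SBr (2 * n) :: (diagram \<Rightarrow> 'a) set) \<subseteq> Br (2 * n)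
    \<and> br_one (2 * n) \<in> (SBr (2 * n) :: (diagram \<Rightarrow> 'a) set)
    \<and> (\<forall>x\<in>SBr (2 * n). \<forall>y\<in>SBr (2 * n). br_mult (2 * n) \<delta> x y \<in> SBr (2 * n))
    \<and> \<not> module.dependent br_scale (basis_elt ` sym_diagrams (2 * n) :: (diagram \<Rightarrow> 'a) set)
    \<and> card (basis_elt ` sym_diagrams (2 * n) :: (diagram \<Rightarrow> 'a) set) = a_seq (2 * n)"
proof -
  define N where "N = 2 * n"
  have card1: "card (sym_diagrams N) = a_seq N"
  proof -
    have "invol (dots N) (reflect N)" unfolding invol_def using reflect_dots reflect_ne[of N]
      by (simp add: N_def)
    moreover have "card (dots N) = 2 * N" by (simp add: dots_def card_cartesian_product)
    ultimately show ?thesis using card_PM[OF finite_dots] sym_diagrams_PM by simp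
  qed
  have sub: "(SBr N :: (diagram \<Rightarrow> 'a) set) \<subseteq> Br N"
    unfolding SBr_eq Br_def using sym_brauer by blast
  have one: "br_one N \<in> (SBr N :: (diagram \<Rightarrow> 'a) set)"
    unfolding SBr_eq br_one_def basis_elt_def using id_sym by auto
  have mult: "br_mult N \<delta> x y \<in> SBr N" if x: "x \<in> SBr N" and y: "y \<in> SBr N" for x y :: "diagram \<Rightarrow> 'a"
  proof -
    have x0: "\<And>D. D \<notin> sym_diagrams N \<Longrightarrow> x D = 0" and y0: "\<And>D. D \<notin> sym_diagrams N \<Longrightarrow> y D = 0"
      using x y unfolding SBr_eq by auto
    have "br_mult N \<delta> x y D = 0" if D: "D \<notin> sym_diagrams N" for D
      unfolding br_mult_def
    proof (intro sum.neutral ballI)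
      fix d1 d2 assume "d1 \<in> brauer_diagrams N" "d2 \<in> brauer_diagrams N"
      show "(if concat N d1 d2 = D then x d1 * y d2 * \<delta> ^ loops N d1 d2 else 0) = 0"
      proof (cases "d1 \<in> sym_diagrams N \<and> d2 \<in> sym_diagrams N")
        case True
        then have "concat N d1 d2 \<noteq> D" using concat_sym D by blast
        then show ?thesis by simp
      next
        case False then show ?thesis using x0 y0 by auto
      qed
    qed
    then show ?thesis unfolding SBr_eq by blast
  qed
  have card2: "card (basis_elt ` sym_diagrams N :: (diagram \<Rightarrow> 'a) set) = a_seq N"
    using card_image[OF inj_on_subset[OF inj_basis subset_UNIV]] card1 by metis
  show ?thesis using card1 sub one mult indep_basis card2 unfolding N_def[symmetric] by blast
qed


end
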